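(* Let $C$ be a binary linear constant weight code of dimension at least $2$. Then $\mathrm{PAut}(C)$ has a subgroup isomorphic to $S_3$.
   Context: A binary linear constant weight code of weight $w$ is an $\mathbb{F}_2$-subspace of $\mathbb{F}_2^n$ all of whose non-zero vectors have exactly $w$ coordinates equal to $1$. $S_n$ acts on $\mathbb{F}_2^n$ by $\sigma(v_1,\dots,v_n)=(v_{\sigma^{-1}(1)},\dots,v_{\sigma^{-1}(n)})$, and $\mathrm{PAut}(C)=\{\sigma\in S_n:\sigma(C)=C\}$. *)

theory Defs
  imports "HOL-Analysis.Analysis" "HOL-Library.Z2" "HOL-Algebra.Sym_Groups" "HOL-Algebra.Bij"
begin

text \<open>Vectors of \<open>F_2^n\<close> are \<open>bit ^ 'n\<close> with a finite index type \<open>'n\<close> (\<open>n = CARD('n)\<close>).\<close>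

definition hweight :: "bit ^ 'n::finite \<Rightarrow> nat" where
  "hweight v = card {i. v $ i = 1}"

definition lin_const_weight_code :: "nat \<Rightarrow> (bit ^ 'n::finite) set \<Rightarrow> bool" where
  "lin_const_weight_code w C \<longleftrightarrow> vec.subspace C \<and> (\<forall>v\<in>C. v \<noteq> 0 \<longrightarrow> hweight v = w)"

definition perm_act :: "('n::finite \<Rightarrow> 'n) \<Rightarrow> bit ^ 'n \<Rightarrow> bit ^ 'n" where
  "perm_act \<sigma> v = (\<chi> i. v $ (inv_into UNIV \<sigma> i))"

definition PAut :: "(bit ^ 'n::finite) set \<Rightarrow> ('n \<Rightarrow> 'n) set" where
  "PAut C = {\<sigma>. \<sigma> permutes (UNIV :: 'n set) \<and> perm_act \<sigma> ` C = C}"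

definition PAut_group :: "(bit ^ 'n::finite) set \<Rightarrow> ('n \<Rightarrow> 'n) monoid" where
  "PAut_group C = (BijGroup (UNIV :: 'n set)) \<lparr>carrier := PAut C\<rparr>"

end

theory Submission
  imports Defs
begin

instance bit :: finite
proof
  have "\<And>x::bit. x \<in> {0,1}" by (case_tac x) auto
  then have "(UNIV::bit set) = {0,1}" by blast
  then show "finite (UNIV::bit set)" by (metis finite.emptyI finite.insertI)
qed

lemma bit_nz: "(x::bit) \<noteq> 0 \<longleftrightarrow> x = 1" by (cases x) auto
lemma bit_add_self[simp]: "(x::bit) + x = 0" by simp
lemma vec_add_self[simp]: "(x::bit^'n::finite) + x = 0" by (simp add: vec_eq_iff)

definition lin :: "(bit^'n::finite) set \<Rightarrow> (bit^'n \<Rightarrow> bit) \<Rightarrow> bool" where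
  "lin C f \<longleftrightarrow> (\<forall>x\<in>C. \<forall>y\<in>C. f (x+y) = f x + f y)"
definition EE :: "(bit^'n::finite) set \<Rightarrow> (bit^'n \<Rightarrow> bit) \<Rightarrow> (bit^'n) set" where
  "EE C f = {c\<in>C. f c = 1}"
definition fib :: "(bit^'n::finite) set \<Rightarrow> (bit^'n \<Rightarrow> bit) \<Rightarrow> 'n set" where
  "fib C f = {i. \<forall>c\<in>C. c$i = f c}"

locale cwc =
  fixes C :: "(bit^'n::finite) set" and w :: nat
  assumes sub: "vec.subspace C" and wt: "\<forall>v\<in>C. v \<noteq> 0 \<longrightarrow> hweight v = w"
begin

lemma addC: "x \<in> C \<Longrightarrow> y \<in> C \<Longrightarrow> x + y \<in> C"
  using sub vec.subspace_add by blast
lemma zeroC: "0 \<in> C"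
  using sub vec.subspace_0 by blast
lemma finC: "finite C" by simp

lemma lin_zero: "lin C f \<Longrightarrow> f 0 = 0"
  unfolding lin_def using zeroC by (metis add.right_neutral add_left_imp_eq bit_add_self)

lemma lin_col: "lin C (\<lambda>c. c$i)" by (simp add: lin_def)

lemma half:
  assumes f: "lin C f" and g: "lin C g" and c0: "c0 \<in> C" "g c0 \<noteq> 0"
    and c: "c \<in> C" "f c \<noteq> g c"
  shows "card (EE C f) = 2 * card (EE C f \<inter> EE C g)"
proof -
  have "\<exists>c1\<in>C. f c1 = 0 \<and> g c1 = 1"
  proof (cases "f c = 0")
    case True then show ?thesis using c bit_nz by (metis)
  next
    case False
    hence fc: "f c = 1" "g c = 0" using c bit_nz by metis+
    have gc0: "g c0 = 1" using c0 bit_nz by blast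
    show ?thesis
    proof (cases "f c0 = 0")
      case True then show ?thesis using gc0 c0 by blast
    next
      case False
      hence "f c0 = 1" using bit_nz by blast
      then show ?thesis using f g fc gc0 c c0 addC unfolding lin_def
        by (intro bexI[of _ "c + c0"]) auto
    qed
  qed
  then obtain c1 where c1: "c1 \<in> C" "f c1 = 0" "g c1 = 1" by blast
  let ?A = "EE C f \<inter> EE C g" and ?B = "EE C f - EE C g"
  have inj: "inj_on (\<lambda>x. x + c1) ?A" by (auto simp: inj_on_def)
  have img: "(\<lambda>x. x + c1) ` ?A = ?B"
  proof
    show "(\<lambda>x. x + c1) ` ?A \<subseteq> ?B"
      using f g c1 addC unfolding lin_def EE_def by auto
    show "?B \<subseteq> (\<lambda>x. x + c1) ` ?A"
    proof
      fix y assume y: "y \<in> ?B"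
      hence "y + c1 \<in> ?A" using f g c1 addC bit_nz unfolding lin_def EE_def by auto
      moreover have "y = (y + c1) + c1" by (simp add: add.assoc)
      ultimately show "y \<in> (\<lambda>x. x + c1) ` ?A" by blast
    qed
  qed
  have "card ?B = card ?A" using card_image[OF inj] img by simp
  moreover have "card (EE C f) = card ?A + card ?B"
    by (subst card_Un_disjoint[symmetric]) (auto intro: arg_cong[where f=card] simp: EE_def)
  ultimately show ?thesis by simp
qed

lemma wsum:
  assumes f: "lin C f"
  shows "(\<Sum>c\<in>EE C f. hweight c) = w * card (EE C f)"
proof -
  have "\<And>c. c \<in> EE C f \<Longrightarrow> hweight c = w"
    using wt lin_zero[OF f] unfolding EE_def by fastforce
  then show ?thesis by simp
qed

lemma dcount:
  "(\<Sum>c\<in>EE C f. hweight c) = (\<Sum>i\<in>UNIV. card (EE C f \<inter> EE C (\<lambda>c. c$i)))"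
proof -
  have "(\<Sum>c\<in>EE C f. hweight c) = (\<Sum>c\<in>EE C f. \<Sum>i\<in>UNIV. if c$i = 1 then 1 else 0)"
    unfolding hweight_def by (simp add: sum.If_cases)
  also have "\<dots> = (\<Sum>i\<in>UNIV. \<Sum>c\<in>EE C f. if c$i = 1 then 1 else 0)"
    by (rule sum.swap)
  also have "\<dots> = (\<Sum>i\<in>UNIV. card (EE C f \<inter> EE C (\<lambda>c. c$i)))"
  proof (rule sum.cong[OF refl])
    fix i
    have "EE C f \<inter> EE C (\<lambda>c. c$i) = EE C f \<inter> {c. c$i = 1}" by (auto simp: EE_def)
    then show "(\<Sum>c\<in>EE C f. if c$i = 1 then 1 else 0) = card (EE C f \<inter> EE C (\<lambda>c. c$i))"
      by (simp add: sum.If_cases)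
  qed
  finally show ?thesis .
qed

lemma fibcard:
  assumes f: "lin C f" and c0: "c0 \<in> C" "f c0 \<noteq> 0"
  shows "card (fib C f) + CARD('n) = 2*w + card (fib C (\<lambda>_. 0))"
proof -
  define F where "F = fib C f"
  define Z where "Z = fib C (\<lambda>_. 0::bit)"
  define e where "e = card (EE C f)"
  have disj: "\<And>i. i \<in> F \<Longrightarrow> i \<notin> Z" using c0 unfolding F_def Z_def fib_def by auto
  have epos: "e > 0" unfolding e_def using c0 bit_nz by (auto simp: EE_def card_gt_0_iff)
  have tm: "2 * card (EE C f \<inter> EE C (\<lambda>c. c$i)) = e * (if i \<in> F then 2 else if i \<in> Z then 0 else 1)" for i
  proof (cases "i \<in> F")
    case True
    hence "EE C f \<inter> EE C (\<lambda>c. c$i) = EE C f" unfolding F_def fib_def EE_def by auto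
    then show ?thesis using True by (simp add: e_def)
  next
    case False
    show ?thesis
    proof (cases "i \<in> Z")
      case True
      hence "EE C f \<inter> EE C (\<lambda>c. c$i) = {}" unfolding Z_def fib_def EE_def by auto
      then show ?thesis using True False by simp
    next
      case nZ: False
      obtain c1 where c1: "c1 \<in> C" "c1$i \<noteq> 0" using nZ unfolding Z_def fib_def by auto
      obtain c2 where c2: "c2 \<in> C" "f c2 \<noteq> c2$i" using False unfolding F_def fib_def by auto
      have "card (EE C f) = 2 * card (EE C f \<inter> EE C (\<lambda>c. c$i))"
        by (rule half[OF f lin_col c1 c2])
      then show ?thesis using False nZ by (simp add: e_def)
    qed
  qed
  have "2 * w * e = 2 * (\<Sum>c\<in>EE C f. hweight c)" using wsum[OF f] by (simp add: e_def)
  also have "\<dots> = (\<Sum>i\<in>UNIV. 2 * card (EE C f \<inter> EE C (\<lambda>c. c$i)))"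
    by (simp add: dcount sum_distrib_left)
  also have "\<dots> = (\<Sum>i\<in>UNIV. e * (if i \<in> F then 2 else if i \<in> Z then 0 else 1))"
    using tm by simp
  also have "\<dots> = e * (\<Sum>i\<in>UNIV. (if i \<in> F then 1 else 0) + (if i \<in> Z then 0 else 1))"
    by (simp add: sum_distrib_left disj cong: if_cong) (rule sum.cong, auto simp: disj)
  also have "\<dots> = e * (card F + card (- Z))"
    by (simp add: sum.distrib sum.If_cases Compl_eq_Diff_UNIV)
  finally have "2 * w = card F + card (- Z)" using epos by simp
  moreover have "card (- Z) + card Z = CARD('n)"
  proof -
    have "card (- Z \<union> Z) = card (- Z) + card Z" by (rule card_Un_disjoint) auto
    moreover have "- Z \<union> Z = UNIV" by blast
    ultimately show ?thesis by simp
  qed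
  ultimately show ?thesis unfolding F_def Z_def by linarith
qed

end

locale cw3 = cwc +
  fixes u v :: "bit^'n" and al be :: "bit^'n \<Rightarrow> bit"
  assumes uC: "u \<in> C" and vC: "v \<in> C"
    and al_add: "\<And>x y. al (x + y) = al x + al y"
    and be_add: "\<And>x y. be (x + y) = be x + be y"
    and alu: "al u = 1" and alv: "al v = 0" and beu: "be u = 0" and bev: "be v = 1"
begin

definition ee :: "nat \<Rightarrow> bit^'n" where
  "ee k = (if k = 1 then u else if k = 2 then v else if k = 3 then u + v else 0)"
definition kk :: "bit^'n \<Rightarrow> nat" where
  "kk c = (if al c = 1 then 1 else 0) + (if be c = 1 then 2 else 0)"
definition AA :: "(nat \<Rightarrow> nat) \<Rightarrow> bit^'n \<Rightarrow> bit^'n" where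
  "AA p c = c + ee (kk c) + ee (p (kk c))"

lemma al0: "al 0 = 0" using al_add[of 0 0] by (metis add.right_neutral add_left_imp_eq bit_add_self)
lemma be0: "be 0 = 0" using be_add[of 0 0] by (metis add.right_neutral add_left_imp_eq bit_add_self)

lemma kk_ee: "k \<le> 3 \<Longrightarrow> kk (ee k) = k"
  by (cases "k = 0"; cases "k = 1"; cases "k = 2"; cases "k = 3")
     (auto simp: kk_def ee_def al0 be0 al_add be_add alu alv beu bev)

lemma kk_le: "kk c \<le> 3" by (simp add: kk_def)

lemma al_ee_kk: "al (ee (kk c)) = al c" and be_ee_kk: "be (ee (kk c)) = be c"
  using bit_nz[of "al c"] bit_nz[of "be c"]
  by (auto simp: kk_def ee_def al0 be0 al_add be_add alu alv beu bev)

lemma kk_eqI: "al x = al y \<Longrightarrow> be x = be y \<Longrightarrow> kk x = kk y" by (simp add: kk_def)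

lemma eeC: "ee k \<in> C" using uC vC zeroC addC by (simp add: ee_def)

lemma AAC: "c \<in> C \<Longrightarrow> AA p c \<in> C" unfolding AA_def using eeC addC by simp

lemma perm_le3: "p permutes {1..3} \<Longrightarrow> p k \<le> 3 \<longleftrightarrow> k \<le> 3"
proof -
  assume p: "p permutes {1..3}"
  show ?thesis
  proof (cases "k \<in> {1..3}")
    case True then show ?thesis using permutes_in_image[OF p, of k] by auto
  next
    case False then show ?thesis using permutes_not_in[OF p False] by simp
  qed
qed

lemma kk_AA: "p permutes {1..3} \<Longrightarrow> kk (AA p c) = p (kk c)"
proof -
  assume p: "p permutes {1..3}"
  have le: "p (kk c) \<le> 3" using perm_le3[OF p] kk_le by blast
  have "kk (AA p c) = kk (ee (p (kk c)))"
    by (rule kk_eqI) (simp_all add: AA_def al_add be_add al_ee_kk be_ee_kk)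
  then show ?thesis using kk_ee[OF le] by simp
qed

lemma AA_comp: "p permutes {1..3} \<Longrightarrow> q permutes {1..3} \<Longrightarrow> AA p (AA q c) = AA (p \<circ> q) c"
proof -
  assume p: "p permutes {1..3}" and q: "q permutes {1..3}"
  have "AA p (AA q c) = c + ee (kk c) + ee (q (kk c)) + ee (q (kk c)) + ee (p (q (kk c)))"
    unfolding AA_def[of p] kk_AA[OF q] by (simp add: AA_def)
  also have "\<dots> = c + ee (kk c) + ee (p (q (kk c)))"
    by (metis add.assoc add.right_neutral vec_add_self)
  finally show ?thesis by (simp add: AA_def)
qed

lemma AA_id: "AA id c = c" by (simp add: AA_def add.assoc)

lemma ee0: "ee 0 = 0" by (simp add: ee_def)

lemma ee_sums: "ee 1 + ee 2 = ee 3" "ee 2 + ee 1 = ee 3" "ee 1 + ee 3 = ee 2" "ee 3 + ee 1 = ee 2"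
   "ee 2 + ee 3 = ee 1" "ee 3 + ee 2 = ee 1"
proof -
  have a: "u + (u + v) = v" by (simp add: add.assoc[symmetric])
  have b: "v + (u + v) = u" by (simp add: add.commute[of u v] add.assoc[symmetric])
  show "ee 1 + ee 2 = ee 3" "ee 2 + ee 1 = ee 3" "ee 1 + ee 3 = ee 2" "ee 3 + ee 1 = ee 2"
   "ee 2 + ee 3 = ee 1" "ee 3 + ee 2 = ee 1"
    by (simp_all add: ee_def a b add.commute[of v u] add.commute[of "u+v"])
qed

lemma ee_trip:
  assumes "a \<in> {1,2,3}" "b \<in> {1,2,3}" "c \<in> {1,2,3}" "a \<noteq> b" "a \<noteq> c" "b \<noteq> c"
  shows "ee a + ee b = ee c"
  using assms ee_sums by auto

lemma perm_trip:
  assumes p: "p permutes {1..3}" and "a \<in> {1,2,3}" "b \<in> {1,2,3}" "c \<in> {1,2,3}" "a \<noteq> b" "a \<noteq> c" "b \<noteq> c"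
  shows "ee (p a) + ee (p b) = ee (p c)"
proof -
  have in3: "x \<in> {1,2,3} \<Longrightarrow> p x \<in> {1,2,3}" for x
    using permutes_in_image[OF p, of x] by auto
  have "inj p" using p permutes_inj by blast
  then show ?thesis using assms by (intro ee_trip in3) (auto dest: injD)
qed

lemma p0: "p permutes {1..(3::nat)} \<Longrightarrow> p 0 = 0" by (erule permutes_not_in) simp

lemma bc: "(b::bit) = 0 \<or> b = 1" using bit_nz by blast

lemma AA_add:
  assumes p: "p permutes {1..3}"
  shows "AA p (x + y) = AA p x + AA p y"
proof -
  have t: "ee (p 1) + ee (p 2) = ee (p 3)" "ee (p 2) + ee (p 1) = ee (p 3)"
    "ee (p 1) + ee (p 3) = ee (p 2)" "ee (p 3) + ee (p 1) = ee (p 2)"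
    "ee (p 2) + ee (p 3) = ee (p 1)" "ee (p 3) + ee (p 2) = ee (p 1)"
    by (rule perm_trip[OF p]; simp)+
  have z: "ee (p 0) = 0" using p0[OF p] ee0 by simp
  have M: "ee (p (kk (x + y))) = ee (p (kk x)) + ee (p (kk y))"
    using bc[of "al x"] bc[of "be x"] bc[of "al y"] bc[of "be y"]
    by (elim disjE) (simp_all add: kk_def al_add be_add t[unfolded numeral_3_eq_3 numeral_2_eq_2 One_nat_def] z)
  have N: "ee (kk (x + y)) = ee (kk x) + ee (kk y)"
    using bc[of "al x"] bc[of "be x"] bc[of "al y"] bc[of "be y"]
    by (elim disjE) (simp_all add: kk_def al_add be_add ee_sums[unfolded numeral_3_eq_3 numeral_2_eq_2 One_nat_def] ee0)
  show ?thesis unfolding AA_def M N by (simp add: algebra_simps)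
qed


definition ty :: "'n \<Rightarrow> (bit^'n \<Rightarrow> bit)" where "ty i = (\<lambda>c. if c \<in> C then c$i else 0)"
definition sh :: "(nat \<Rightarrow> nat) \<Rightarrow> (bit^'n \<Rightarrow> bit) \<Rightarrow> (bit^'n \<Rightarrow> bit)" where
  "sh p f = (\<lambda>c. if c \<in> C then f (AA p c) else 0)"
definition FF :: "(bit^'n \<Rightarrow> bit) \<Rightarrow> 'n set" where "FF f = {j. ty j = f}"
definition enum :: "'n set \<Rightarrow> 'n \<Rightarrow> nat" where "enum S = (SOME h. bij_betw h S {0..<card S})"
definition idx :: "'n \<Rightarrow> nat" where "idx i = enum (FF (ty i)) i"
definition tau :: "(nat \<Rightarrow> nat) \<Rightarrow> 'n \<Rightarrow> 'n" where
  "tau p i = (THE j. ty j = sh p (ty i) \<and> idx j = idx i)"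

lemma enum_bij: "bij_betw (enum S) S {0..<card S}"
  unfolding enum_def using someI_ex[OF ex_bij_betw_finite_nat[OF finite[of S]]] .

lemma idx_lt: "idx i < card (FF (ty i))"
proof -
  have "i \<in> FF (ty i)" by (simp add: FF_def)
  then show ?thesis using enum_bij[of "FF (ty i)"] unfolding idx_def bij_betw_def by auto
qed

lemma idx_inj: "ty j = ty j' \<Longrightarrow> idx j = idx j' \<Longrightarrow> j = j'"
proof -
  assume t: "ty j = ty j'" and x: "idx j = idx j'"
  have "j \<in> FF (ty j)" "j' \<in> FF (ty j)" using t by (auto simp: FF_def)
  moreover have "inj_on (enum (FF (ty j))) (FF (ty j))" using enum_bij bij_betw_def by blast
  ultimately show ?thesis using x t unfolding idx_def by (metis inj_on_contraD)
qed

lemma FF_fib: "(\<And>c. c \<notin> C \<Longrightarrow> f c = 0) \<Longrightarrow> FF f = fib C f"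
  unfolding FF_def fib_def ty_def by (auto simp: fun_eq_iff)

lemma perm_inv3: "p permutes {1..3} \<Longrightarrow> inv' p permutes {1..3}" by (rule permutes_inv)

lemma AA_inv: "p permutes {1..3} \<Longrightarrow> AA p (AA (inv' p) c) = c"
  by (simp add: AA_comp permutes_inv permutes_inv_o AA_id)

lemma card_sh:
  assumes p: "p permutes {1..3}"
  shows "card (FF (sh p (ty i))) = card (FF (ty i))"
proof (cases "\<forall>c\<in>C. c$i = 0")
  case True
  have "sh p (ty i) = ty i" unfolding sh_def ty_def using True AAC by (auto simp: fun_eq_iff)
  then show ?thesis by simp
next
  case False
  then obtain c0 where c0: "c0 \<in> C" "c0$i \<noteq> 0" by blast
  have l1: "lin C (ty i)" by (simp add: lin_def ty_def addC)
  have l2: "lin C (sh p (ty i))" by (simp add: lin_def ty_def sh_def addC AAC AA_add[OF p])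
  have n1: "ty i c0 \<noteq> 0" using c0 by (simp add: ty_def)
  have cc: "AA (inv' p) c0 \<in> C" using c0 AAC by blast
  have n2: "sh p (ty i) (AA (inv' p) c0) \<noteq> 0" using c0 cc AAC
    by (simp add: sh_def ty_def AA_inv[OF p])
  have "FF (ty i) = fib C (ty i)" by (rule FF_fib) (simp add: ty_def)
  moreover have "FF (sh p (ty i)) = fib C (sh p (ty i))" by (rule FF_fib) (simp add: sh_def)
  ultimately show ?thesis using fibcard[OF l1 c0(1) n1] fibcard[OF l2 cc n2] by simp
qed

lemma tau_prop:
  assumes p: "p permutes {1..3}"
  shows "ty (tau p i) = sh p (ty i) \<and> idx (tau p i) = idx i"
proof -
  let ?T = "FF (sh p (ty i))"
  have "idx i \<in> {0..<card ?T}" using idx_lt[of i] card_sh[OF p] by simp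
  then obtain j where j: "j \<in> ?T" "enum ?T j = idx i"
    using enum_bij[of ?T] unfolding bij_betw_def by (metis imageE)
  have tj: "ty j = sh p (ty i)" using j by (simp add: FF_def)
  have "idx j = idx i" using j tj by (simp add: idx_def)
  then have ex: "ty j = sh p (ty i) \<and> idx j = idx i" using tj by simp
  show ?thesis unfolding tau_def
    by (rule theI[of _ j]) (use ex idx_inj in auto)
qed

lemma sh_sh: "p permutes {1..3} \<Longrightarrow> q permutes {1..3} \<Longrightarrow> sh p (sh q f) = sh (q \<circ> p) f"
  by (auto simp: sh_def fun_eq_iff AAC AA_comp)

lemma sh_id: "sh id (ty i) = ty i"
  by (auto simp: sh_def ty_def fun_eq_iff AA_id)

lemma tau_comp:
  assumes p: "p permutes {1..3}" and q: "q permutes {1..3}"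
  shows "tau p (tau q i) = tau (q \<circ> p) i"
proof (rule idx_inj)
  have qp: "q \<circ> p permutes {1..3}" using p q by (rule permutes_compose)
  show "ty (tau p (tau q i)) = ty (tau (q \<circ> p) i)"
    using tau_prop[OF p] tau_prop[OF q] tau_prop[OF qp] sh_sh[OF p q] by simp
  show "idx (tau p (tau q i)) = idx (tau (q \<circ> p) i)"
    using tau_prop[OF p] tau_prop[OF q] tau_prop[OF qp] by simp
qed

lemma tau_id: "tau id i = i"
  by (rule idx_inj) (use tau_prop[OF permutes_id] sh_id in auto)

definition Phi :: "(nat \<Rightarrow> nat) \<Rightarrow> 'n \<Rightarrow> 'n" where "Phi p = tau (inv' p)"

lemma Phi_comp:
  assumes p: "p permutes {1..3}" and q: "q permutes {1..3}"
  shows "Phi (p \<circ> q) = Phi p \<circ> Phi q"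
proof -
  have "inv' (p \<circ> q) = inv' q \<circ> inv' p"
    using p q permutes_bij o_inv_distrib by blast
  then have "Phi (p \<circ> q) = tau (inv' q \<circ> inv' p)" by (simp add: Phi_def)
  then show ?thesis using tau_comp[OF permutes_inv[OF p] permutes_inv[OF q]]
    by (simp add: Phi_def fun_eq_iff)
qed

lemma Phi_id: "Phi id = id" by (simp add: Phi_def fun_eq_iff tau_id)

lemma Phi_inv:
  assumes p: "p permutes {1..3}"
  shows "Phi p \<circ> Phi (inv' p) = id" "Phi (inv' p) \<circ> Phi p = id"
  using Phi_comp[OF p permutes_inv[OF p]] Phi_comp[OF permutes_inv[OF p] p]
  by (simp_all add: permutes_inv_o[OF p] Phi_id)

lemma Phi_bij: "p permutes {1..3} \<Longrightarrow> bij (Phi p)"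
  using Phi_inv o_bij by metis

lemma Phi_act:
  assumes p: "p permutes {1..3}" and c: "c \<in> C"
  shows "perm_act (Phi p) c = AA p c"
proof -
  have "inv' (Phi p) = Phi (inv' p)" by (rule inv_unique_comp; rule Phi_inv[OF p])
  also have "\<dots> = tau p" unfolding Phi_def using p permutes_bij inv_inv_eq by metis
  finally have iv: "inv' (Phi p) = tau p" .
  show ?thesis
  proof (simp add: perm_act_def vec_eq_iff iv, intro allI)
    fix i
    have "c $ tau p i = ty (tau p i) c" using c by (simp add: ty_def)
    also have "\<dots> = AA p c $ i" using tau_prop[OF p, of i] c AAC by (simp add: sh_def ty_def)
    finally show "c $ tau p i = AA p c $ i" .
  qed
qed

lemma Phi_PAut:
  assumes p: "p permutes {1..3}"
  shows "Phi p \<in> PAut C"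
proof -
  have "Phi p permutes UNIV" using Phi_bij[OF p] by (simp add: permutes_univ bij_iff)
  moreover have "perm_act (Phi p) ` C = C"
  proof
    show "perm_act (Phi p) ` C \<subseteq> C" using Phi_act[OF p] AAC by auto
    show "C \<subseteq> perm_act (Phi p) ` C"
    proof
      fix c assume c: "c \<in> C"
      have "c = perm_act (Phi p) (AA (inv' p) c)" using Phi_act[OF p] AAC c AA_inv[OF p] by simp
      then show "c \<in> perm_act (Phi p) ` C" using AAC c by blast
    qed
  qed
  ultimately show ?thesis by (simp add: PAut_def)
qed

lemma AA_ee: "k \<le> 3 \<Longrightarrow> AA p (ee k) = ee (p k)"
  by (simp add: AA_def kk_ee)

lemma Phi_inj:
  assumes p: "p permutes {1..3}" and q: "q permutes {1..3}" and e: "Phi p = Phi q"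
  shows "p = q"
proof
  fix k
  show "p k = q k"
  proof (cases "k \<in> {1..3}")
    case False then show ?thesis using permutes_not_in[OF p] permutes_not_in[OF q] by simp
  next
    case True
    hence k3: "k \<le> 3" by simp
    have "AA p (ee k) = AA q (ee k)" using Phi_act[OF p eeC] Phi_act[OF q eeC] e by metis
    hence "ee (p k) = ee (q k)" using AA_ee[OF k3] by simp
    hence "kk (ee (p k)) = kk (ee (q k))" by simp
    then show ?thesis using kk_ee perm_le3[OF p] perm_le3[OF q] k3 by metis
  qed
qed


lemma Bij_UNIV: "f \<in> Bij UNIV \<longleftrightarrow> bij f"
  by (simp add: Bij_def extensional_def)

lemma PAut_Bij: "f \<in> PAut C \<Longrightarrow> f \<in> Bij UNIV"
  by (auto simp: PAut_def Bij_UNIV dest: permutes_bij)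

lemma PG_mult: "f \<in> Bij UNIV \<Longrightarrow> g \<in> Bij UNIV \<Longrightarrow> f \<otimes>\<^bsub>PAut_group C\<^esub> g = f \<circ> g"
  by (simp add: PAut_group_def BijGroup_def compose_def fun_eq_iff)

lemma PG_one: "\<one>\<^bsub>PAut_group C\<^esub> = id"
  by (simp add: PAut_group_def BijGroup_def fun_eq_iff)

lemma PG_carrier: "carrier (PAut_group C) = PAut C"
  by (simp add: PAut_group_def)

lemma Phi_Bij: "p permutes {1..3} \<Longrightarrow> Phi p \<in> Bij UNIV"
  using Phi_PAut PAut_Bij by blast

lemma PG_inv:
  assumes p: "p permutes {1..3}"
  shows "m_inv (PAut_group C) (Phi p) = Phi (inv' p)"
  unfolding m_inv_def
proof (rule the_equality)
  have ip: "inv' p permutes {1..3}" using p by (rule permutes_inv)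
  show "Phi (inv' p) \<in> carrier (PAut_group C) \<and>
    Phi p \<otimes>\<^bsub>PAut_group C\<^esub> Phi (inv' p) = \<one>\<^bsub>PAut_group C\<^esub> \<and>
    Phi (inv' p) \<otimes>\<^bsub>PAut_group C\<^esub> Phi p = \<one>\<^bsub>PAut_group C\<^esub>"
    using Phi_PAut[OF ip] Phi_Bij[OF p] Phi_Bij[OF ip] Phi_inv[OF p]
    by (simp add: PG_carrier PG_mult PG_one)
  fix y assume y: "y \<in> carrier (PAut_group C) \<and>
    Phi p \<otimes>\<^bsub>PAut_group C\<^esub> y = \<one>\<^bsub>PAut_group C\<^esub> \<and>
    y \<otimes>\<^bsub>PAut_group C\<^esub> Phi p = \<one>\<^bsub>PAut_group C\<^esub>"
  hence yB: "y \<in> Bij UNIV" using PAut_Bij by (simp add: PG_carrier)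
  hence "Phi p \<circ> y = id" using y Phi_Bij[OF p] by (simp add: PG_mult PG_one)
  hence "Phi (inv' p) \<circ> (Phi p \<circ> y) = Phi (inv' p)" by simp
  then show "y = Phi (inv' p)" using Phi_inv(2)[OF p] by (metis comp_assoc id_comp)
qed

definition HH :: "('n \<Rightarrow> 'n) set" where "HH = Phi ` {p. p permutes {1..3}}"

lemma HH_subgroup: "subgroup HH (PAut_group C)"
proof
  show "HH \<subseteq> carrier (PAut_group C)" using Phi_PAut by (auto simp: HH_def PG_carrier)
  show "x \<otimes>\<^bsub>PAut_group C\<^esub> y \<in> HH" if xy: "x \<in> HH" "y \<in> HH" for x y
  proof -
    obtain p q where p: "p permutes {1..3}" "x = Phi p" and q: "q permutes {1..3}" "y = Phi q"
      using xy unfolding HH_def by blast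
    have "x \<otimes>\<^bsub>PAut_group C\<^esub> y = Phi (p \<circ> q)"
      using p q Phi_Bij Phi_comp by (simp add: PG_mult)
    then show ?thesis using permutes_compose[OF q(1) p(1)] by (simp add: HH_def)
  qed
  show "\<one>\<^bsub>PAut_group C\<^esub> \<in> HH" using Phi_id permutes_id
    by (auto simp: PG_one HH_def intro!: image_eqI[of _ _ id])
  show "m_inv (PAut_group C) x \<in> HH" if "x \<in> HH" for x
    using that PG_inv permutes_inv by (auto simp: HH_def)
qed

lemma Phi_iso: "Phi \<in> iso (sym_group 3) ((PAut_group C)\<lparr>carrier := HH\<rparr>)"
  unfolding iso_def
proof (intro CollectI conjI)
  show "Phi \<in> hom (sym_group 3) ((PAut_group C)\<lparr>carrier := HH\<rparr>)"
    unfolding hom_def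
  proof (intro CollectI conjI ballI)
    show "Phi \<in> carrier (sym_group 3) \<rightarrow> carrier ((PAut_group C)\<lparr>carrier := HH\<rparr>)"
      by (auto simp: sym_group_carrier HH_def)
    fix x y assume "x \<in> carrier (sym_group 3)" "y \<in> carrier (sym_group 3)"
    hence x: "x permutes {1..3}" and y: "y permutes {1..3}" by (auto simp: sym_group_carrier)
    have "Phi x \<otimes>\<^bsub>PAut_group C\<^esub> Phi y = Phi (x \<circ> y)"
      using Phi_Bij[OF x] Phi_Bij[OF y] Phi_comp[OF x y] by (simp add: PG_mult)
    then show "Phi (x \<otimes>\<^bsub>sym_group 3\<^esub> y) = Phi x \<otimes>\<^bsub>(PAut_group C)\<lparr>carrier := HH\<rparr>\<^esub> Phi y"
      by (simp add: sym_group_mult)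
  qed
  show "bij_betw Phi (carrier (sym_group 3)) (carrier ((PAut_group C)\<lparr>carrier := HH\<rparr>))"
    unfolding bij_betw_def
    by (auto simp: sym_group_carrier HH_def inj_on_def intro: Phi_inj)
qed

lemma main: "\<exists>H. subgroup H (PAut_group C) \<and> (PAut_group C)\<lparr>carrier := H\<rparr> \<cong> sym_group 3"
proof (intro exI conjI)
  show "subgroup HH (PAut_group C)" by (rule HH_subgroup)
  have "sym_group 3 \<cong> (PAut_group C)\<lparr>carrier := HH\<rparr>"
    using Phi_iso by (auto simp: is_iso_def)
  then show "(PAut_group C)\<lparr>carrier := HH\<rparr> \<cong> sym_group 3"
    by (rule group.iso_sym[OF sym_group_is_group])
qed

end

theorem proposition5p7:
  fixes C :: "(bit ^ 'n::finite) set" and w :: nat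
  assumes "lin_const_weight_code w C"
    and "vec.dim C \<ge> 2"
  shows "\<exists>H. subgroup H (PAut_group C) \<and> (PAut_group C)\<lparr>carrier := H\<rparr> \<cong> sym_group 3"
proof -
  have sub: "vec.subspace C" and wt: "\<forall>v\<in>C. v \<noteq> 0 \<longrightarrow> hweight v = w"
    using assms(1) by (auto simp: lin_const_weight_code_def)
  obtain B where B: "B \<subseteq> C" "vec.independent B" "C \<subseteq> vec.span B" "card B = vec.dim C"
    by (rule vec.basis_exists)
  have cB: "card B \<ge> 2" using B assms(2) by simp
  then have "B \<noteq> {}" by (intro notI) simp
  then obtain u where u: "u \<in> B" by blast
  have "card (B - {u}) \<ge> 1" using cB u by simp
  then have "B - {u} \<noteq> {}" by (intro notI) simp
  then obtain v where v: "v \<in> B" "v \<noteq> u" by blast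
  have ind: "vec.independent {u, v}" using B(2) u v vec.independent_mono[of B "{u,v}"] by simp
  obtain g1 :: "bit^'n \<Rightarrow> bit^'n" where g1: "Vector_Spaces.linear (*s) (*s) g1"
      "\<forall>x\<in>{u,v}. g1 x = (if x = u then 1 else 0)"
    using vec.linear_independent_extend[OF ind, of "\<lambda>x. if x = u then (1::bit^'n) else 0"] by blast
  obtain g2 :: "bit^'n \<Rightarrow> bit^'n" where g2: "Vector_Spaces.linear (*s) (*s) g2"
      "\<forall>x\<in>{u,v}. g2 x = (if x = v then 1 else 0)"
    using vec.linear_independent_extend[OF ind, of "\<lambda>x. if x = v then (1::bit^'n) else 0"] by blast
  define k :: 'n where "k = undefined"
  define al where "al x = g1 x $ k" for x
  define be where "be x = g2 x $ k" for x
  have a1: "al (x + y) = al x + al y" for x y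
  proof -
    have "g1 (x + y) = g1 x + g1 y" using Vector_Spaces.linear_iff[THEN iffD1, OF g1(1)] by blast
    then show ?thesis by (simp add: al_def)
  qed
  have a2: "be (x + y) = be x + be y" for x y
  proof -
    have "g2 (x + y) = g2 x + g2 y" using Vector_Spaces.linear_iff[THEN iffD1, OF g2(1)] by blast
    then show ?thesis by (simp add: be_def)
  qed
  have uC: "u \<in> C" and vC: "v \<in> C" using B u v by auto
  have g1u: "g1 u = 1" and g1v: "g1 v = 0" and g2u: "g2 u = 0" and g2v: "g2 v = 1"
    using g1(2) g2(2) v(2) by auto
  interpret cw3 C w u v al be
  proof (rule cw3.intro)
    show "cwc C w" by (rule cwc.intro[OF sub wt])
    show "cw3_axioms C u v al be"
      by (rule cw3_axioms.intro[OF uC vC a1 a2]) (simp_all add: al_def be_def g1u g1v g2u g2v)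
  qed
  show ?thesis by (rule main)
qed

end
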